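(* Under hypotheses (A) and (B), $$\log r_e^*\le-\sup_{\gamma\in\Gamma}\min_{1\le i\le d}\frac{\gamma_i}{G_{ii}}\Bigl(\frac{\mu_i}{1+\gamma_i}-\nu_i\Bigr).$$
   Context: Jackson network with $d$ queues: arrival rates $\lambda_i\ge0$, service rates $\mu_i>0$, routing matrix $P=(p_{ij})_{i,j=1}^d$ nonnegative with $p_{ii}=0$, $\sum_jp_{ij}\le1$, $p_{i0}=1-\sum_jp_{ij}$. Queue-length process $(Z(t))$: continuous-time Markov process on $\mathbb{Z}_+^d$ with jumps $+\epsilon^i$ at rate $\lambda_i$, $-\epsilon^i$ at rate $\mu_ip_{i0}$, $\epsilon^j-\epsilon^i$ at rate $\mu_ip_{ij}$ (jumps leaving $\mathbb{Z}_+^d$ suppressed). Hypothesis (A): the kernel of these jump rates on $\mathbb{Z}^d$ is irreducible (equivalently spectral radius of $P$ $<1$ and for every $i$ some $\lambda_jp^{(n)}_{ji}>0$); then the traffic equations $\nu_j=\lambda_j+\sum_i\nu_ip_{ij}$ have a unique solution with $\nu_i>0$. Hypothesis (B): $\nu_i<\mu_i$ for all $i$. $G=(I-P)^{-1}$. $Q_{ij}$: probability that the chain on $\{0,\dots,d\}$ with transitions $p_{ij}$ ($0$ absorbing) started at $i$ ever visits $j$ (time $0$ included). For $\gamma\in\mathbb{R}_+^d$, $\overrightarrow{\gamma_i}$ has components $\gamma_i^j=\log(1+Q_{ji}\gamma_i)$; $\Gamma$ is the set of $\gamma\in\mathbb{R}_+^d$ such that for every $i$ and nonzero $v\in\mathbb{R}_+^d$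 with $v^i=0$, $\overrightarrow{\gamma_i}\cdot v<\max_j\overrightarrow{\gamma_j}\cdot v$. With $\tau_E=\inf\{t>0:Z(t)\in E\}$, the essential spectral radius $r_e^*$ is the infimum of all $r>0$ for which some finite $E\subset\mathbb{Z}_+^d$ gives $\int_0^\infty r^{-t}\mathbb{P}_x(Z(t)=y,\tau_E>t)\,dt<\infty$ for all $x,y\notin E$. *)

theory Defs
  imports "HOL-Analysis.Analysis"
begin

definition exit_prob :: "real^'d^'d \<Rightarrow> 'd::finite \<Rightarrow> real" where
  "exit_prob P i = 1 - (\<Sum>j\<in>UNIV. P $ i $ j)"

definition jackson_params ::
  "('d::finite \<Rightarrow> real) \<Rightarrow> ('d \<Rightarrow> real) \<Rightarrow> real^'d^'d \<Rightarrow> bool" where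
  "jackson_params lam mu P \<longleftrightarrow>
     (\<forall>i. lam i \<ge> 0) \<and> (\<forall>i. mu i > 0) \<and> (\<forall>i j. P $ i $ j \<ge> 0) \<and>
     (\<forall>i. P $ i $ i = 0) \<and> (\<forall>i. (\<Sum>j\<in>UNIV. P $ i $ j) \<le> 1)"

definition unitz :: "'d \<Rightarrow> 'd \<Rightarrow> int" where
  "unitz i = (\<lambda>k. if k = i then 1 else 0)"

text \<open>One positive-rate jump of the free (unsuppressed) kernel on Z^d.\<close>
definition free_step ::
  "('d::finite \<Rightarrow> real) \<Rightarrow> ('d \<Rightarrow> real) \<Rightarrow> real^'d^'d \<Rightarrow> ('d \<Rightarrow> int) \<Rightarrow> ('d \<Rightarrow> int) \<Rightarrow> bool" where
  "free_step lam mu P x y \<longleftrightarrow>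
     (\<exists>i. (lam i > 0 \<and> y = (\<lambda>k. x k + unitz i k)) \<or>
          (mu i * exit_prob P i > 0 \<and> y = (\<lambda>k. x k - unitz i k)) \<or>
          (\<exists>j. mu i * P $ i $ j > 0 \<and> y = (\<lambda>k. x k - unitz i k + unitz j k)))"

text \<open>Hypothesis (A): the kernel of jump rates on Z^d is irreducible.\<close>
definition hypA :: "('d::finite \<Rightarrow> real) \<Rightarrow> ('d \<Rightarrow> real) \<Rightarrow> real^'d^'d \<Rightarrow> bool" where
  "hypA lam mu P \<longleftrightarrow> (\<forall>x y. (free_step lam mu P)\<^sup>*\<^sup>* x y)"

definition traffic :: "('d::finite \<Rightarrow> real) \<Rightarrow> real^'d^'d \<Rightarrow> ('d \<Rightarrow> real) \<Rightarrow> bool" where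
  "traffic lam P nu \<longleftrightarrow> (\<forall>j. nu j = lam j + (\<Sum>i\<in>UNIV. nu i * P $ i $ j))"

definition Gmat :: "real^'d^'d \<Rightarrow> real^'d^'d" where
  "Gmat P = matrix_inv (mat 1 - P)"

text \<open>First-passage probabilities of the routing chain on {0,...,d} (0 absorbing):
  hit n i j = probability that the chain started at i visits j for the first time at step n.
  Since 0 is absorbing and different from j, moves to 0 contribute nothing.\<close>
primrec hit :: "real^'d^'d \<Rightarrow> nat \<Rightarrow> 'd::finite \<Rightarrow> 'd \<Rightarrow> real" where
  "hit P 0 i j = (if i = j then 1 else 0)"
| "hit P (Suc n) i j = (if i = j then 0 else (\<Sum>k\<in>UNIV. P $ i $ k * hit P n k j))"

text \<open>Q i j: probability that the routing chain started at i ever visits j (time 0 included).\<close>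
definition Qhit :: "real^'d^'d \<Rightarrow> 'd::finite \<Rightarrow> 'd \<Rightarrow> real" where
  "Qhit P i j = (\<Sum>n. hit P n i j)"

definition gvec :: "real^'d^'d \<Rightarrow> ('d::finite \<Rightarrow> real) \<Rightarrow> 'd \<Rightarrow> 'd \<Rightarrow> real" where
  "gvec P \<gamma> i j = ln (1 + Qhit P j i * \<gamma> i)"

definition Gamma_set :: "real^'d^'d \<Rightarrow> ('d::finite \<Rightarrow> real) set" where
  "Gamma_set P = {\<gamma>. (\<forall>i. \<gamma> i \<ge> 0) \<and>
     (\<forall>i v. (\<forall>j. v j \<ge> 0) \<and> (\<exists>k. v k \<noteq> 0) \<and> v i = 0 \<longrightarrow>
        (\<Sum>k\<in>UNIV. gvec P \<gamma> i k * v k) < (MAX j. \<Sum>k\<in>UNIV. gvec P \<gamma> j k * v k))}"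

text \<open>Jump rates of the queue-length process on Z_+^d (jumps leaving Z_+^d suppressed).\<close>
definition jrate ::
  "('d::finite \<Rightarrow> real) \<Rightarrow> ('d \<Rightarrow> real) \<Rightarrow> real^'d^'d \<Rightarrow> ('d \<Rightarrow> nat) \<Rightarrow> ('d \<Rightarrow> nat) \<Rightarrow> real" where
  "jrate lam mu P x y =
     (\<Sum>i\<in>UNIV. if y = x(i := Suc (x i)) then lam i else 0) +
     (\<Sum>i\<in>UNIV. if 0 < x i \<and> y = x(i := x i - 1) then mu i * exit_prob P i else 0) +
     (\<Sum>i\<in>UNIV. \<Sum>j\<in>UNIV. if j \<noteq> i \<and> 0 < x i \<and> y = (x(i := x i - 1))(j := Suc (x j))
                         then mu i * P $ i $ j else 0)"

text \<open>Uniformization constant (dominates the total jump rate out of every state).\<close>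
definition unif_const :: "('d::finite \<Rightarrow> real) \<Rightarrow> ('d \<Rightarrow> real) \<Rightarrow> real" where
  "unif_const lam mu = 1 + (\<Sum>i\<in>UNIV. lam i) + (\<Sum>i\<in>UNIV. mu i)"

definition unif_kernel ::
  "('d::finite \<Rightarrow> real) \<Rightarrow> ('d \<Rightarrow> real) \<Rightarrow> real^'d^'d \<Rightarrow> ('d \<Rightarrow> nat) \<Rightarrow> ('d \<Rightarrow> nat) \<Rightarrow> real" where
  "unif_kernel lam mu P x y =
     jrate lam mu P x y / unif_const lam mu +
     (if y = x then 1 - (\<Sum>\<^sub>\<infinity>z. jrate lam mu P x z) / unif_const lam mu else 0)"

primrec taboo_pow ::
  "('d::finite \<Rightarrow> real) \<Rightarrow> ('d \<Rightarrow> real) \<Rightarrow> real^'d^'d \<Rightarrow> ('d \<Rightarrow> nat) set \<Rightarrow> nat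
     \<Rightarrow> ('d \<Rightarrow> nat) \<Rightarrow> ('d \<Rightarrow> nat) \<Rightarrow> real" where
  "taboo_pow lam mu P E 0 x y = (if x = y then 1 else 0)"
| "taboo_pow lam mu P E (Suc n) x y =
     (\<Sum>\<^sub>\<infinity>z. unif_kernel lam mu P x z * (if z \<in> E then 0 else taboo_pow lam mu P E n z y))"

text \<open>P_x(Z(t) = y, tau_E > t) for x, y outside E, via the uniformization construction
  Z(t) = Y_{N(t)} with N a Poisson process of rate c independent of the jump chain Y.\<close>
definition taboo_prob ::
  "('d::finite \<Rightarrow> real) \<Rightarrow> ('d \<Rightarrow> real) \<Rightarrow> real^'d^'d \<Rightarrow> ('d \<Rightarrow> nat) set \<Rightarrow> real
     \<Rightarrow> ('d \<Rightarrow> nat) \<Rightarrow> ('d \<Rightarrow> nat) \<Rightarrow> real" where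
  "taboo_prob lam mu P E t x y =
     (\<Sum>n. exp (- unif_const lam mu * t) * (unif_const lam mu * t) ^ n / fact n
            * taboo_pow lam mu P E n x y)"

definition ess_set :: "('d::finite \<Rightarrow> real) \<Rightarrow> ('d \<Rightarrow> real) \<Rightarrow> real^'d^'d \<Rightarrow> real set" where
  "ess_set lam mu P = {r. r > 0 \<and> (\<exists>E. finite E \<and> (\<forall>x y. x \<notin> E \<longrightarrow> y \<notin> E \<longrightarrow>
      (\<integral>\<^sup>+ t\<in>{0..}. ennreal (r powr (- t) * taboo_prob lam mu P E t x y) \<partial>lborel) < \<infinity>))}"

definition ess_spec_rad :: "('d::finite \<Rightarrow> real) \<Rightarrow> ('d \<Rightarrow> real) \<Rightarrow> real^'d^'d \<Rightarrow> real" where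
  "ess_spec_rad lam mu P = Inf (ess_set lam mu P)"

end

theory Submission
  imports Defs "HOL-Probability.Distributions"
begin


definition up :: "('d \<Rightarrow> nat) \<Rightarrow> 'd \<Rightarrow> ('d \<Rightarrow> nat)" where
  "up x i = x(i := Suc (x i))"
definition dn :: "('d \<Rightarrow> nat) \<Rightarrow> 'd \<Rightarrow> ('d \<Rightarrow> nat)" where
  "dn x i = x(i := x i - 1)"
definition mv :: "('d \<Rightarrow> nat) \<Rightarrow> 'd \<Rightarrow> 'd \<Rightarrow> ('d \<Rightarrow> nat)" where
  "mv x i j = (x(i := x i - 1))(j := Suc (x j))"

definition Jset :: "('d::finite \<Rightarrow> nat) \<Rightarrow> ('d \<Rightarrow> nat) set" where
  "Jset x = insert x (range (up x) \<union> range (dn x) \<union> (\<Union>i. range (mv x i)))"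

lemma finite_Jset: "finite (Jset x)"
  unfolding Jset_def by auto

definition Jsum where
  "Jsum lam mu P g x =
     (\<Sum>i\<in>UNIV. lam i * g (up x i)) +
     (\<Sum>i\<in>UNIV. if 0 < x i then mu i * exit_prob P i * g (dn x i) else 0) +
     (\<Sum>i\<in>UNIV. \<Sum>j\<in>UNIV. if j \<noteq> i \<and> 0 < x i then mu i * P $ i $ j * g (mv x i j) else 0)"

lemma Jset_mem: "up x i \<in> Jset x" "dn x i \<in> Jset x" "mv x i j \<in> Jset x" "x \<in> Jset x"
  unfolding Jset_def by blast+

lemma jrate_out: "z \<notin> Jset x \<Longrightarrow> jrate lam mu P x z = 0"
proof -
  assume z: "z \<notin> Jset x"
  hence zz: "\<And>i. z \<noteq> up x i" "\<And>i. z \<noteq> dn x i" "\<And>i j. z \<noteq> mv x i j"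
    using Jset_mem by metis+
  show ?thesis unfolding jrate_def using zz by (simp add: up_def dn_def mv_def)
qed

lemma sum_delta_gen:
  assumes "finite J" "\<And>i. i \<in> I \<Longrightarrow> a i \<in> J" "finite I"
  shows "(\<Sum>z\<in>J. \<Sum>i\<in>I. if z = a i then h i z else 0) = (\<Sum>i\<in>I. h i (a i))"
  apply (subst sum.swap)
  using assms by (intro sum.cong refl) (simp add: sum.delta')

lemma jrate_alt: "jrate lam mu P x z =
     (\<Sum>i\<in>UNIV. if z = up x i then lam i else 0) +
     (\<Sum>i\<in>UNIV. if z = dn x i then (if 0 < x i then mu i * exit_prob P i else 0) else 0) +
     (\<Sum>i\<in>UNIV. \<Sum>j\<in>UNIV. if z = mv x i j then (if j \<noteq> i \<and> 0 < x i then mu i * P $ i $ j else 0) else 0)"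
  unfolding jrate_def up_def dn_def mv_def
  by (intro arg_cong2[where f="(+)"] sum.cong refl) auto

lemma sum_Jset_jrate:
  fixes x :: "'d::finite \<Rightarrow> nat"
  shows "(\<Sum>z\<in>Jset x. jrate lam mu P x z * g z) = Jsum lam mu P g x"
proof -
  have F: "finite (Jset x)" by (rule finite_Jset)
  have "(\<Sum>z\<in>Jset x. jrate lam mu P x z * g z) =
     (\<Sum>z\<in>Jset x. (\<Sum>i\<in>UNIV. if z = up x i then lam i * g z else 0)) +
     (\<Sum>z\<in>Jset x. (\<Sum>i\<in>UNIV. if z = dn x i then (if 0 < x i then mu i * exit_prob P i * g z else 0) else 0)) +
     (\<Sum>z\<in>Jset x. (\<Sum>i\<in>UNIV. \<Sum>j\<in>UNIV. if z = mv x i j then (if j \<noteq> i \<and> 0 < x i then mu i * P $ i $ j * g z else 0) else 0))"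
    unfolding jrate_alt sum.distrib[symmetric] distrib_right sum_distrib_right
    by (intro sum.cong refl) (auto intro!: sum.cong)
  also have "(\<Sum>z\<in>Jset x. (\<Sum>i\<in>UNIV. \<Sum>j\<in>UNIV. if z = mv x i j then (if j \<noteq> i \<and> 0 < x i then mu i * P $ i $ j * g z else 0) else 0))
     = (\<Sum>i\<in>UNIV. \<Sum>j\<in>UNIV. if j \<noteq> i \<and> 0 < x i then mu i * P $ i $ j * g (mv x i j) else 0)"
    apply (rule trans[OF sum.swap])
    apply (intro sum.cong refl)
    apply (rule sum_delta_gen)
    using F Jset_mem by auto
  finally show ?thesis
    unfolding Jsum_def
    apply (subst (asm) sum_delta_gen[OF F])
    apply (simp add: Jset_mem) apply simp
    apply (subst (asm) sum_delta_gen[OF F])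
    apply (simp add: Jset_mem) apply simp
    by simp
qed

lemma exit_prob_nonneg: "jackson_params lam mu P \<Longrightarrow> exit_prob P i \<ge> 0"
  unfolding jackson_params_def exit_prob_def by auto

lemma jrate_nonneg: "jackson_params lam mu P \<Longrightarrow> jrate lam mu P x z \<ge> 0"
  unfolding jrate_def using exit_prob_nonneg[of lam mu P]
  by (intro add_nonneg_nonneg sum_nonneg) (auto simp: jackson_params_def less_imp_le)

lemma infsum_jrate:
  fixes x :: "'d::finite \<Rightarrow> nat"
  shows "(\<Sum>\<^sub>\<infinity>z. jrate lam mu P x z * g z) = Jsum lam mu P g x"
proof -
  have "(\<Sum>\<^sub>\<infinity>z. jrate lam mu P x z * g z) = infsum (\<lambda>z. jrate lam mu P x z * g z) (Jset x)"
    by (rule infsum_cong_neutral) (auto simp: jrate_out)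
  also have "\<dots> = Jsum lam mu P g x"
    by (simp add: infsum_finite[OF finite_Jset] sum_Jset_jrate)
  finally show ?thesis .
qed

lemma infsum_jrate1:
  fixes x :: "'d::finite \<Rightarrow> nat"
  shows "infsum (jrate lam mu P x) UNIV = Jsum lam mu P (\<lambda>_. 1) x"
  using infsum_jrate[of lam mu P x "\<lambda>_. 1"] by simp

lemma Jsum_one:
  assumes "jackson_params lam mu P"
  shows "Jsum lam mu P (\<lambda>_. 1) x = (\<Sum>i\<in>UNIV. lam i) + (\<Sum>i\<in>UNIV. if 0 < x i then mu i else 0)"
proof -
  have pii: "\<And>i. P $ i $ i = 0" using assms by (simp add: jackson_params_def)
  have "\<And>i. (\<Sum>j\<in>UNIV. if j \<noteq> i \<and> 0 < x i then mu i * P $ i $ j else 0)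
      = (if 0 < x i then mu i * (\<Sum>j\<in>UNIV. P $ i $ j) else 0)"
  proof -
    fix i
    have "(\<Sum>j\<in>UNIV. if j \<noteq> i \<and> 0 < x i then mu i * P $ i $ j else 0)
        = (\<Sum>j\<in>UNIV. if 0 < x i then mu i * P $ i $ j else 0)"
      by (intro sum.cong) (auto simp: pii)
    thus "?thesis i" by (simp add: sum_distrib_left)
  qed
  hence "Jsum lam mu P (\<lambda>_. 1) x = (\<Sum>i\<in>UNIV. lam i) +
     (\<Sum>i\<in>UNIV. (if 0 < x i then mu i * exit_prob P i else 0) + (if 0 < x i then mu i * (\<Sum>j\<in>UNIV. P $ i $ j) else 0))"
    unfolding Jsum_def sum.distrib by simp
  also have "\<dots> = (\<Sum>i\<in>UNIV. lam i) + (\<Sum>i\<in>UNIV. if 0 < x i then mu i else 0)"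
    by (intro arg_cong2[where f="(+)"] sum.cong refl) (auto simp: exit_prob_def algebra_simps)
  finally show ?thesis .
qed

lemma Jsum_one_le:
  assumes "jackson_params lam mu P"
  shows "Jsum lam mu P (\<lambda>_. 1) x \<le> unif_const lam mu - 1"
proof -
  have "(\<Sum>i\<in>UNIV. if 0 < x i then mu i else 0) \<le> (\<Sum>i\<in>UNIV. mu i)"
    using assms by (intro sum_mono) (auto simp: jackson_params_def less_imp_le)
  thus ?thesis using Jsum_one[OF assms] by (simp add: unif_const_def)
qed

lemma Jsum_one_nonneg:
  assumes "jackson_params lam mu P"
  shows "Jsum lam mu P (\<lambda>_. 1) x \<ge> 0"
  unfolding Jsum_one[OF assms] using assms
  by (intro add_nonneg_nonneg sum_nonneg) (auto simp: jackson_params_def less_imp_le)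

lemma unif_const_pos:
  assumes "jackson_params lam mu P"
  shows "unif_const lam mu \<ge> 1"
  using assms unfolding unif_const_def jackson_params_def
  by (smt (verit) sum_nonneg)

lemma unif_kernel_nonneg:
  assumes "jackson_params lam mu P"
  shows "unif_kernel lam mu P x z \<ge> 0"
proof -
  have C: "unif_const lam mu \<ge> 1" by (rule unif_const_pos[OF assms])
  have "(\<Sum>\<^sub>\<infinity>z. jrate lam mu P x z) / unif_const lam mu \<le> 1"
    using C Jsum_one_le[OF assms, of x] by (simp add: infsum_jrate1 divide_le_eq)
  thus ?thesis unfolding unif_kernel_def using jrate_nonneg[OF assms] C
    by (intro add_nonneg_nonneg) auto
qed

lemma unif_kernel_out: "z \<notin> Jset x \<Longrightarrow> unif_kernel lam mu P x z = 0"
  unfolding unif_kernel_def using Jset_mem(4)[of x] by (auto simp: jrate_out)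

lemma infsum_kernel:
  fixes x :: "'d::finite \<Rightarrow> nat"
  shows "(\<Sum>\<^sub>\<infinity>z. unif_kernel lam mu P x z * g z)
     = g x + (Jsum lam mu P g x - Jsum lam mu P (\<lambda>_. 1) x * g x) / unif_const lam mu"
proof -
  have "(\<Sum>\<^sub>\<infinity>z. unif_kernel lam mu P x z * g z) = infsum (\<lambda>z. unif_kernel lam mu P x z * g z) (Jset x)"
    by (rule infsum_cong_neutral) (auto simp: unif_kernel_out)
  also have "\<dots> = (\<Sum>z\<in>Jset x. jrate lam mu P x z * g z / unif_const lam mu
       + (if z = x then (1 - Jsum lam mu P (\<lambda>_. 1) x / unif_const lam mu) * g x else 0))"
    unfolding infsum_finite[OF finite_Jset]
    by (intro sum.cong refl) (auto simp: unif_kernel_def infsum_jrate1 distrib_right)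
  also have "\<dots> = Jsum lam mu P g x / unif_const lam mu + (1 - Jsum lam mu P (\<lambda>_. 1) x / unif_const lam mu) * g x"
    unfolding sum.distrib sum_divide_distrib[symmetric] sum_Jset_jrate
    using finite_Jset[of x] Jset_mem(4)[of x] by (simp add: sum.delta')
  finally show ?thesis by (simp add: diff_divide_distrib algebra_simps)
qed


lemma infsum_kernel_fin:
  fixes x :: "'d::finite \<Rightarrow> nat"
  shows "(\<Sum>\<^sub>\<infinity>z. unif_kernel lam mu P x z * g z) = (\<Sum>z\<in>Jset x. unif_kernel lam mu P x z * g z)"
proof -
  have "(\<Sum>\<^sub>\<infinity>z. unif_kernel lam mu P x z * g z) = infsum (\<lambda>z. unif_kernel lam mu P x z * g z) (Jset x)"
    by (rule infsum_cong_neutral) (auto simp: unif_kernel_out)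
  thus ?thesis by (simp add: infsum_finite[OF finite_Jset])
qed

lemma taboo_pow_nonneg:
  assumes "jackson_params lam mu P"
  shows "taboo_pow lam mu P E n x y \<ge> 0"
proof (induction n arbitrary: x)
  case 0 thus ?case by simp
next
  case (Suc n)
  show ?case by (simp, rule infsum_nonneg) (use Suc unif_kernel_nonneg[OF assms] in auto)
qed

lemma taboo_bound:
  fixes f :: "('d::finite \<Rightarrow> nat) \<Rightarrow> real"
  assumes jp: "jackson_params lam mu P" and fpos: "\<And>z. f z > 0" and rho: "\<rho> \<ge> 0"
    and drift: "\<And>x. x \<notin> E \<Longrightarrow> (\<Sum>\<^sub>\<infinity>z. unif_kernel lam mu P x z * f z) \<le> \<rho> * f x"
  shows "x \<notin> E \<Longrightarrow> taboo_pow lam mu P E n x y * f y \<le> \<rho> ^ n * f x"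
proof (induction n arbitrary: x)
  case 0 thus ?case using fpos[of x] by (auto simp: less_imp_le)
next
  case (Suc n)
  have "taboo_pow lam mu P E (Suc n) x y * f y =
     (\<Sum>z\<in>Jset x. unif_kernel lam mu P x z * ((if z \<in> E then 0 else taboo_pow lam mu P E n z y) * f y))"
    by (simp add: infsum_kernel_fin sum_distrib_right mult.assoc)
  also have "\<dots> \<le> (\<Sum>z\<in>Jset x. unif_kernel lam mu P x z * (\<rho> ^ n * f z))"
  proof (intro sum_mono mult_left_mono)
    fix z
    show "(if z \<in> E then 0 else taboo_pow lam mu P E n z y) * f y \<le> \<rho> ^ n * f z"
      using Suc.IH[of z] fpos[of z] rho by (auto intro: mult_nonneg_nonneg less_imp_le)
  qed (rule unif_kernel_nonneg[OF jp])
  also have "\<dots> = \<rho> ^ n * (\<Sum>\<^sub>\<infinity>z. unif_kernel lam mu P x z * f z)"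
    unfolding infsum_kernel_fin sum_distrib_left by (simp add: algebra_simps)
  also have "\<dots> \<le> \<rho> ^ n * (\<rho> * f x)"
    using drift[OF Suc.prems] rho by (intro mult_left_mono) auto
  finally show ?case by (simp add: algebra_simps)
qed

lemma taboo_pow_le1:
  assumes jp: "jackson_params lam mu P"
  shows "taboo_pow lam mu P E n x y \<le> 1"
proof -
  have A: "taboo_pow lam mu P {} n x y * 1 \<le> 1 ^ n * 1" for x y n
    by (rule taboo_bound[OF jp, of "\<lambda>_. 1" 1 "{}"]) (use infsum_kernel[of lam mu P _ "\<lambda>_. 1"] in auto)
  have "taboo_pow lam mu P E n x y \<le> taboo_pow lam mu P {} n x y"
  proof (induction n arbitrary: x)
    case 0 thus ?case by simp
  next
    case (Suc n)
    show ?case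
      unfolding taboo_pow.simps infsum_kernel_fin
      by (intro sum_mono mult_left_mono) (use Suc unif_kernel_nonneg[OF jp] taboo_pow_nonneg[OF jp] in auto)
  qed
  with A[of n x y] show ?thesis by simp
qed


lemma emeasure_Ici_inf: "emeasure lborel {0::real..} = \<infinity>"
proof (rule ccontr)
  assume "emeasure lborel {0::real..} \<noteq> \<infinity>"
  then obtain v where v: "emeasure lborel {0::real..} = ennreal v" "v \<ge> 0"
    using ennreal_cases[of "emeasure lborel {0::real..}"] by auto
  obtain n :: nat where n: "real n > v" using reals_Archimedean2 by blast
  have "emeasure lborel {0..real n} \<le> emeasure lborel {0::real..}"
    by (intro emeasure_mono) auto
  hence "ennreal (real n) \<le> ennreal v" using v by simp
  with n v show False by (simp add: ennreal_le_iff2)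
qed

lemma poisson_sums:
  fixes c t \<rho> :: real
  shows "(\<lambda>n. exp (- c * t) * (c * t) ^ n / fact n * \<rho> ^ n) sums (exp (- c * t) * exp (c * t * \<rho>))"
proof -
  have "(\<lambda>n. (c * t * \<rho>) ^ n /\<^sub>R fact n) sums exp (c * t * \<rho>)" by (rule exp_converges)
  hence "(\<lambda>n. exp (- c * t) * ((c * t * \<rho>) ^ n /\<^sub>R fact n)) sums (exp (- c * t) * exp (c * t * \<rho>))"
    by (rule sums_mult)
  thus ?thesis by (simp add: power_mult_distrib divide_inverse algebra_simps)
qed

lemma taboo_prob_upper:
  fixes f :: "('d::finite \<Rightarrow> nat) \<Rightarrow> real"
  assumes jp: "jackson_params lam mu P" and fpos: "\<And>z. f z > 0" and rho: "\<rho> \<ge> 0"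
    and drift: "\<And>x. x \<notin> E \<Longrightarrow> (\<Sum>\<^sub>\<infinity>z. unif_kernel lam mu P x z * f z) \<le> \<rho> * f x"
    and x: "x \<notin> E" and t: "t \<ge> 0"
  shows "taboo_prob lam mu P E t x y \<le> f x / f y * exp (- (unif_const lam mu * (1 - \<rho>)) * t)"
proof -
  let ?c = "unif_const lam mu"
  have c: "?c \<ge> 1" by (rule unif_const_pos[OF jp])
  define a where "a n = exp (- ?c * t) * (?c * t) ^ n / fact n * taboo_pow lam mu P E n x y" for n
  define b where "b n = f x / f y * (exp (- ?c * t) * (?c * t) ^ n / fact n * \<rho> ^ n)" for n
  have bs: "b sums (f x / f y * (exp (- ?c * t) * exp (?c * t * \<rho>)))"
    unfolding b_def by (intro sums_mult poisson_sums)
  have a0: "a n \<ge> 0" for n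
    unfolding a_def using c t taboo_pow_nonneg[OF jp] by auto
  have ab: "a n \<le> b n" for n
  proof -
    have tb: "taboo_pow lam mu P E n x y * f y \<le> \<rho> ^ n * f x"
      by (rule taboo_bound[OF jp fpos rho drift x])
    hence "taboo_pow lam mu P E n x y \<le> f x / f y * \<rho> ^ n"
      using fpos[of y] by (simp add: field_simps)
    moreover have "exp (- ?c * t) * (?c * t) ^ n / fact n \<ge> 0" using c t by auto
    ultimately have "exp (- ?c * t) * (?c * t) ^ n / fact n * taboo_pow lam mu P E n x y
       \<le> exp (- ?c * t) * (?c * t) ^ n / fact n * (f x / f y * \<rho> ^ n)"
      by (rule mult_left_mono)
    thus ?thesis unfolding a_def b_def by (simp add: algebra_simps)
  qed
  have sa: "summable a"
    by (rule summable_comparison_test'[OF sums_summable[OF bs], of 0]) (use a0 ab in auto)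
  have "taboo_prob lam mu P E t x y = suminf a" unfolding taboo_prob_def a_def by simp
  also have "\<dots> \<le> suminf b" by (rule suminf_le[OF ab sa sums_summable[OF bs]])
  also have "\<dots> = f x / f y * (exp (- ?c * t) * exp (?c * t * \<rho>))" using bs sums_unique by metis
  also have "\<dots> = f x / f y * exp (- (?c * (1 - \<rho>)) * t)"
    by (simp add: exp_add[symmetric] algebra_simps)
  finally show ?thesis .
qed

lemma taboo_prob_lower:
  fixes x :: "'d::finite \<Rightarrow> nat"
  assumes jp: "jackson_params lam mu P" and t: "t \<ge> 0"
  shows "taboo_prob lam mu P E t x x \<ge> exp (- unif_const lam mu * t)"
proof -
  let ?c = "unif_const lam mu"
  have c: "?c \<ge> 1" by (rule unif_const_pos[OF jp])
  define a where "a n = exp (- ?c * t) * (?c * t) ^ n / fact n * taboo_pow lam mu P E n x x" for n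
  define b where "b n = exp (- ?c * t) * (?c * t) ^ n / fact n * 1 ^ n" for n
  have bs: "b sums (exp (- ?c * t) * exp (?c * t * 1))"
    unfolding b_def by (rule poisson_sums)
  have a0: "a n \<ge> 0" for n
    unfolding a_def using c t taboo_pow_nonneg[OF jp] by auto
  have ab: "a n \<le> b n" for n
  proof -
    have "exp (- ?c * t) * (?c * t) ^ n / fact n \<ge> 0" using c t by auto
    hence "exp (- ?c * t) * (?c * t) ^ n / fact n * taboo_pow lam mu P E n x x \<le> exp (- ?c * t) * (?c * t) ^ n / fact n * 1"
      using taboo_pow_le1[OF jp, of E n x x] by (intro mult_left_mono) auto
    thus ?thesis unfolding a_def b_def by simp
  qed
  have sa: "summable a"
    by (rule summable_comparison_test'[OF sums_summable[OF bs], of 0]) (use a0 ab in auto)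
  have "sum a {..<1} \<le> suminf a" by (rule sum_le_suminf[OF sa]) (use a0 in auto)
  moreover have "taboo_prob lam mu P E t x x = suminf a" unfolding taboo_prob_def a_def by simp
  ultimately show ?thesis by (simp add: a_def)
qed

lemma int_finite:
  fixes h :: "real \<Rightarrow> real"
  assumes r: "r > 0" and a: "m + ln r > 0" and A: "A \<ge> 0"
    and hb: "\<And>t. t \<ge> 0 \<Longrightarrow> h t \<le> A * exp (- m * t)" and h0: "\<And>t. t \<ge> 0 \<Longrightarrow> h t \<ge> 0"
  shows "(\<integral>\<^sup>+ t\<in>{0..}. ennreal (r powr (- t) * h t) \<partial>lborel) < \<infinity>"
proof -
  define l where "l = m + ln r"
  have "(\<integral>\<^sup>+ t\<in>{0..}. ennreal (r powr (- t) * h t) \<partial>lborel)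
      \<le> (\<integral>\<^sup>+ t. ennreal (A / l) * ennreal (erlang_density 0 l t) \<partial>lborel)"
  proof (intro nn_integral_mono)
    fix t :: real
    show "ennreal (r powr - t * h t) * indicator {0..} t \<le> ennreal (A / l) * ennreal (erlang_density 0 l t)"
    proof (cases "t \<ge> 0")
      case True
      have "r powr - t * h t \<le> r powr - t * (A * exp (- m * t))"
        using hb[OF True] by (intro mult_left_mono) auto
      also have "\<dots> = A / l * (l * exp (- l * t))"
      proof -
        have "r powr - t = exp (- t * ln r)" using r by (simp add: powr_def)
        moreover have "exp (- t * ln r) * exp (- m * t) = exp (- l * t)"
          by (simp add: exp_add[symmetric] l_def algebra_simps)
        ultimately show ?thesis using a by (simp add: l_def field_simps)
      qed
      finally show ?thesis using True a A
        by (simp add: erlang_density_def ennreal_mult[symmetric] l_def)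
    qed (simp)
  qed
  also have "\<dots> = ennreal (A / l) * (\<integral>\<^sup>+ t. ennreal (erlang_density 0 l t) \<partial>lborel)"
    by (rule nn_integral_cmult) simp
  also have "\<dots> = ennreal (A / l)"
    using nn_integral_erlang_ith_moment[of l 0 0] a by (simp add: l_def)
  finally show ?thesis by (simp add: order_le_less_trans)
qed

lemma int_infinite:
  fixes h :: "real \<Rightarrow> real"
  assumes r: "r > 0" "ln r \<le> - c"
    and h0: "\<And>t. t \<ge> 0 \<Longrightarrow> h t \<ge> exp (- c * t)"
  shows "(\<integral>\<^sup>+ t\<in>{0..}. ennreal (r powr (- t) * h t) \<partial>lborel) = \<infinity>"
proof -
  have "(\<integral>\<^sup>+ t. indicator {0::real..} t \<partial>lborel) \<le> (\<integral>\<^sup>+ t\<in>{0..}. ennreal (r powr (- t) * h t) \<partial>lborel)"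
  proof (intro nn_integral_mono)
    fix t :: real
    show "indicator {0..} t \<le> ennreal (r powr - t * h t) * indicator {0..} t"
    proof (cases "t \<ge> 0")
      case True
      have "1 \<le> exp (- t * ln r) * exp (- c * t)"
      proof -
        have "c * t \<le> - (t * ln r)" using r True mult_left_mono[OF r(2) True] by (simp add: algebra_simps)
        thus ?thesis by (simp add: exp_add[symmetric] algebra_simps)
      qed
      also have "\<dots> \<le> r powr - t * h t"
        using r h0[OF True] by (simp add: powr_def)
      finally show ?thesis using True by simp
    qed simp
  qed
  thus ?thesis using emeasure_Ici_inf by (simp add: top_unique)
qed


lemma hit_nonneg: "jackson_params lam mu P \<Longrightarrow> hit P n i j \<ge> 0"
proof (induction n arbitrary: i)
  case (Suc n) thus ?case
    by (auto intro!: sum_nonneg mult_nonneg_nonneg simp: jackson_params_def)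
qed simp

lemma hit_partial_le1:
  assumes jp: "jackson_params lam mu P"
  shows "(\<Sum>n<N. hit P n i j) \<le> 1"
proof (induction N arbitrary: i)
  case 0 thus ?case by simp
next
  case (Suc N)
  show ?case
  proof (cases "i = j")
    case True thus ?thesis unfolding sum.lessThan_Suc_shift by simp
  next
    case False
    have "(\<Sum>n<Suc N. hit P n i j) = (\<Sum>n<N. \<Sum>k\<in>UNIV. P $ i $ k * hit P n k j)"
      using False unfolding sum.lessThan_Suc_shift by simp
    also have "\<dots> = (\<Sum>k\<in>UNIV. P $ i $ k * (\<Sum>n<N. hit P n k j))"
      by (simp add: sum.swap[of _ "{..<N}"] sum_distrib_left)
    also have "\<dots> \<le> (\<Sum>k\<in>UNIV. P $ i $ k * 1)"
      using Suc.IH jp by (intro sum_mono mult_left_mono) (auto simp: jackson_params_def)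
    also have "\<dots> \<le> 1" using jp by (simp add: jackson_params_def)
    finally show ?thesis .
  qed
qed

lemma hit_summable:
  assumes jp: "jackson_params lam mu P"
  shows "summable (\<lambda>n. hit P n i j)"
  by (rule summableI_nonneg_bounded[of _ 1]) (use hit_nonneg[OF jp] hit_partial_le1[OF jp] in auto)

lemma Qhit_nonneg: "jackson_params lam mu P \<Longrightarrow> Qhit P i j \<ge> 0"
  unfolding Qhit_def by (intro suminf_nonneg hit_summable) (auto intro: hit_nonneg)

lemma Qhit_diag: "Qhit P j j = 1"
proof -
  have "hit P n j j = (if n = 0 then 1 else 0)" for n by (cases n) auto
  hence "(\<lambda>n. hit P n j j) = (\<lambda>n. if n = 0 then 1 else 0)" by auto
  moreover have "(\<lambda>n::nat. if n = 0 then (1::real) else 0) sums 1"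
    using sums_single[of 0 "\<lambda>_. 1::real"] by simp
  ultimately show ?thesis unfolding Qhit_def by (simp add: sums_iff)
qed

lemma Qhit_rec:
  assumes jp: "jackson_params lam mu P" and ij: "i \<noteq> j"
  shows "Qhit P i j = (\<Sum>k\<in>UNIV. P $ i $ k * Qhit P k j)"
proof -
  have "Qhit P i j = hit P 0 i j + (\<Sum>n. hit P (Suc n) i j)"
    unfolding Qhit_def using suminf_split_head[OF hit_summable[OF jp, of i j]] by simp
  also have "\<dots> = (\<Sum>n. \<Sum>k\<in>UNIV. P $ i $ k * hit P n k j)" using ij by simp
  also have "\<dots> = (\<Sum>k\<in>UNIV. \<Sum>n. P $ i $ k * hit P n k j)"
    by (rule suminf_sum) (intro summable_mult hit_summable[OF jp])
  also have "\<dots> = (\<Sum>k\<in>UNIV. P $ i $ k * Qhit P k j)"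
    unfolding Qhit_def by (intro sum.cong refl suminf_mult hit_summable[OF jp])
  finally show ?thesis .
qed

lemma flow_identity:
  fixes u w c :: "'d::finite \<Rightarrow> real"
  assumes u: "\<And>k. k \<noteq> j \<Longrightarrow> u k = (\<Sum>l\<in>UNIV. P $ k $ l * u l)"
    and w: "\<And>l. w l = c l + (\<Sum>k\<in>UNIV. w k * P $ k $ l)"
  shows "(\<Sum>l\<in>UNIV. c l * u l) = w j * (u j - (\<Sum>l\<in>UNIV. P $ j $ l * u l))"
proof -
  have "(\<Sum>l\<in>UNIV. c l * u l) = (\<Sum>l\<in>UNIV. w l * u l) - (\<Sum>l\<in>UNIV. \<Sum>k\<in>UNIV. w k * P $ k $ l * u l)"
    by (subst w) (simp add: algebra_simps sum.distrib sum_subtractf sum_distrib_right sum_distrib_left)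
  also have "\<dots> = (\<Sum>k\<in>UNIV. w k * (u k - (\<Sum>l\<in>UNIV. P $ k $ l * u l)))"
    by (subst sum.swap) (simp add: algebra_simps sum_subtractf sum_distrib_left)
  also have "\<dots> = (\<Sum>k\<in>UNIV. if k = j then w j * (u j - (\<Sum>l\<in>UNIV. P $ j $ l * u l)) else 0)"
    by (intro sum.cong refl) (auto simp: u)
  finally show ?thesis by simp
qed



lemma sum_unitz: fixes i :: "'d::finite" shows "(\<Sum>k\<in>S. unitz i k) = (if i \<in> S then 1 else 0)"
  by (simp add: unitz_def sum.delta' finite_subset)
definition sret :: "real^'d^'d \<Rightarrow> 'd::finite \<Rightarrow> real" where
  "sret P j = (\<Sum>l\<in>UNIV. P $ j $ l * Qhit P l j)"

lemma traffic_Q: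
  assumes jp: "jackson_params lam mu P" and tr: "traffic lam P nu"
  shows "(\<Sum>l\<in>UNIV. lam l * Qhit P l j) = nu j * (1 - sret P j)"
proof -
  have "(\<Sum>l\<in>UNIV. lam l * Qhit P l j) = nu j * (Qhit P j j - (\<Sum>l\<in>UNIV. P $ j $ l * Qhit P l j))"
    apply (rule flow_identity[of j "\<lambda>l. Qhit P l j" P nu lam])
     apply (erule Qhit_rec[OF jp])
    using tr unfolding traffic_def by blast
  thus ?thesis by (simp add: Qhit_diag sret_def)
qed
lemma invertible_IP:
  fixes P :: "real^'d::finite^'d"
  assumes jp: "jackson_params lam mu P" and hA: "hypA lam mu P"
  shows "invertible (mat 1 - P)"
proof -
  have ker: "x = 0" if hx: "(mat 1 - P) *v x = 0" for x :: "real^'d"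
  proof (rule ccontr)
    assume nz: "x \<noteq> 0"
    have fixp: "x $ k = (\<Sum>l\<in>UNIV. P $ k $ l * x $ l)" for k
    proof -
      have h: "(\<Sum>j\<in>UNIV. x $ j * (if k = j then 1 else 0)) = (\<Sum>j\<in>UNIV. x $ j * P $ k $ j)"
        using hx by (simp add: vec_eq_iff matrix_vector_mult_def mat_def algebra_simps sum_subtractf)
      have "(\<Sum>j\<in>UNIV. x $ j * (if k = j then 1 else 0)) = (\<Sum>j\<in>UNIV. if k = j then x $ j else 0)"
        by (intro sum.cong) auto
      with h show ?thesis by (simp add: mult.commute)
    qed
    define M where "M = Max (range (\<lambda>k. \<bar>x $ k\<bar>))"
    have Mge: "\<bar>x $ k\<bar> \<le> M" for k unfolding M_def by (rule Max_ge) auto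
    obtain k0 where k0: "\<bar>x $ k0\<bar> = M"
    proof -
      have "M \<in> range (\<lambda>k. \<bar>x $ k\<bar>)" unfolding M_def by (rule Max_in) auto
      thus ?thesis using that by auto
    qed
    have Mpos: "M > 0"
    proof (rule ccontr)
      assume "\<not> M > 0"
      hence "x $ k = 0" for k using Mge[of k] by auto
      with nz show False by (simp add: vec_eq_iff)
    qed
    define S where "S = {k. \<bar>x $ k\<bar> = M}"
    have Pnn: "P $ i $ j \<ge> 0" for i j using jp by (simp add: jackson_params_def)
    have Psum: "(\<Sum>j\<in>UNIV. P $ i $ j) \<le> 1" for i using jp by (simp add: jackson_params_def)
    have closed: "(\<Sum>l\<in>UNIV. P $ k $ l) = 1 \<and> (\<forall>l. P $ k $ l > 0 \<longrightarrow> l \<in> S)" if "k \<in> S" for k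
    proof -
      have "M = \<bar>\<Sum>l\<in>UNIV. P $ k $ l * x $ l\<bar>" using that fixp[of k] by (simp add: S_def)
      also have "\<dots> \<le> (\<Sum>l\<in>UNIV. P $ k $ l * \<bar>x $ l\<bar>)"
        by (rule order_trans[OF sum_abs]) (simp add: abs_mult Pnn)
      finally have A: "M \<le> (\<Sum>l\<in>UNIV. P $ k $ l * \<bar>x $ l\<bar>)" .
      have B: "(\<Sum>l\<in>UNIV. P $ k $ l * \<bar>x $ l\<bar>) \<le> (\<Sum>l\<in>UNIV. P $ k $ l * M)"
        by (intro sum_mono mult_left_mono Mge Pnn)
      have C: "(\<Sum>l\<in>UNIV. P $ k $ l * M) \<le> M"
        using Psum[of k] Mpos by (simp add: sum_distrib_right[symmetric] mult_le_cancel_right1)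
      have s1: "(\<Sum>l\<in>UNIV. P $ k $ l) = 1"
      proof -
        have "(\<Sum>l\<in>UNIV. P $ k $ l) * M = M" using A B C by (simp add: sum_distrib_right)
        thus ?thesis using Mpos by simp
      qed
      have "(\<Sum>l\<in>UNIV. P $ k $ l * (M - \<bar>x $ l\<bar>)) = 0"
        using A B C by (simp add: algebra_simps sum_subtractf)
      hence "\<forall>l\<in>UNIV. P $ k $ l * (M - \<bar>x $ l\<bar>) = 0"
        by (subst (asm) sum_nonneg_eq_0_iff) (auto intro!: mult_nonneg_nonneg Pnn simp: Mge)
      hence Z: "\<And>l. P $ k $ l * (M - \<bar>x $ l\<bar>) = 0" by blast
      have "\<forall>l. P $ k $ l > 0 \<longrightarrow> l \<in> S"
      proof (intro allI impI)
        fix l assume "P $ k $ l > 0"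
        with Z[of l] show "l \<in> S" by (simp add: S_def)
      qed
      with s1 show ?thesis by blast
    qed
    define V where "V z = (\<Sum>k\<in>S. z k)" for z :: "'d \<Rightarrow> int"
    have step: "V y \<ge> V z" if "free_step lam mu P z y" for z y
    proof -
      from that obtain i where
        H: "(lam i > 0 \<and> y = (\<lambda>k. z k + unitz i k)) \<or>
          (mu i * exit_prob P i > 0 \<and> y = (\<lambda>k. z k - unitz i k)) \<or>
          (\<exists>j. mu i * P $ i $ j > 0 \<and> y = (\<lambda>k. z k - unitz i k + unitz j k))"
        unfolding free_step_def by blast
      have mui: "mu i > 0" using jp by (simp add: jackson_params_def)
      from H show ?thesis
      proof (elim disjE conjE exE)
        assume "y = (\<lambda>k. z k + unitz i k)"
        thus ?thesis by (simp add: V_def sum.distrib sum_unitz)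
      next
        assume b1: "mu i * exit_prob P i > 0" and b: "y = (\<lambda>k. z k - unitz i k)"
        have "exit_prob P i > 0" using b1 mui by (simp add: zero_less_mult_iff)
        hence "i \<notin> S" using closed[of i] by (auto simp: exit_prob_def)
        thus ?thesis using b by (simp add: V_def sum_subtractf sum_unitz)
      next
        fix j assume c1: "mu i * P $ i $ j > 0" and c: "y = (\<lambda>k. z k - unitz i k + unitz j k)"
        have "P $ i $ j > 0" using c1 mui by (simp add: zero_less_mult_iff)
        hence "i \<in> S \<longrightarrow> j \<in> S" using closed[of i] by auto
        thus ?thesis using c by (simp add: V_def sum.distrib sum_subtractf sum_unitz)
      qed
    qed
    have mono: "V y \<ge> V z" if "(free_step lam mu P)\<^sup>*\<^sup>* z y" for z y
      using that by (induction rule: rtranclp_induct) (auto dest: step)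
    have "(free_step lam mu P)\<^sup>*\<^sup>* (\<lambda>_. 0) (\<lambda>k. - unitz k0 k)"
      using hA by (simp add: hypA_def)
    from mono[OF this] have "V (\<lambda>k. - unitz k0 k) \<ge> 0" by (simp add: V_def)
    moreover have "k0 \<in> S" using k0 by (simp add: S_def)
    ultimately show False by (simp add: V_def sum_negf sum_unitz)
  qed
  have "\<exists>B :: real^'d^'d. B ** (mat 1 - P) = mat 1"
    using ker by (subst matrix_left_invertible_ker) blast
  thus ?thesis by (simp add: invertible_left_inverse)
qed

lemma G_diag:
  assumes jp: "jackson_params lam mu P" and hA: "hypA lam mu P"
  shows "Gmat P $ j $ j * (1 - sret P j) = 1"
proof -
  have inv: "invertible (mat 1 - P)" by (rule invertible_IP[OF jp hA])
  have "Gmat P ** (mat 1 - P) = mat 1"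
    unfolding Gmat_def matrix_inv_def
    by (rule someI2_ex) (use inv in \<open>auto simp: invertible_def\<close>)
  hence e: "(Gmat P ** (mat 1 - P)) $ j $ l = mat 1 $ j $ l" for l by simp
  have w: "Gmat P $ j $ l = (if j = l then 1 else 0) + (\<Sum>k\<in>UNIV. Gmat P $ j $ k * P $ k $ l)" for l
  proof -
    have "(\<Sum>k\<in>UNIV. Gmat P $ j $ k * ((if k = l then 1 else 0) - P $ k $ l)) = (if j = l then 1 else 0)"
      using e[of l] by (simp add: matrix_matrix_mult_def mat_def)
    moreover have "(\<Sum>k\<in>UNIV. Gmat P $ j $ k * ((if k = l then 1 else 0) - P $ k $ l))
        = (\<Sum>k\<in>UNIV. if k = l then Gmat P $ j $ k else 0) - (\<Sum>k\<in>UNIV. Gmat P $ j $ k * P $ k $ l)"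
    proof -
      have "(\<Sum>k\<in>UNIV. Gmat P $ j $ k * (if k = l then 1 else 0)) = (\<Sum>k\<in>UNIV. if k = l then Gmat P $ j $ k else 0)"
        by (intro sum.cong) auto
      thus ?thesis by (simp add: right_diff_distrib sum_subtractf)
    qed
    ultimately show ?thesis by simp
  qed
  have "(\<Sum>l\<in>UNIV. (if j = l then 1 else 0) * Qhit P l j) = Gmat P $ j $ j * (Qhit P j j - sret P j)"
    unfolding sret_def
    by (rule flow_identity[of j "\<lambda>l. Qhit P l j" P "\<lambda>l. Gmat P $ j $ l" "\<lambda>l. if j = l then 1 else 0"])
      (erule Qhit_rec[OF jp], rule w)
  moreover have "(\<Sum>l\<in>UNIV. (if j = l then 1 else 0) * Qhit P l j) = 1"
  proof -
    have "(\<Sum>l\<in>UNIV. (if j = l then 1 else 0) * Qhit P l j) = (\<Sum>l\<in>UNIV. if j = l then Qhit P l j else 0)"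
      by (intro sum.cong) auto
    thus ?thesis by (simp add: Qhit_diag)
  qed
  ultimately show ?thesis by (simp add: Qhit_diag)
qed


definition aa :: "real^'d^'d \<Rightarrow> ('d::finite \<Rightarrow> real) \<Rightarrow> 'd \<Rightarrow> 'd \<Rightarrow> real" where
  "aa P \<gamma> j i = 1 + Qhit P i j * \<gamma> j"

definition fj :: "real^'d^'d \<Rightarrow> ('d::finite \<Rightarrow> real) \<Rightarrow> 'd \<Rightarrow> ('d \<Rightarrow> nat) \<Rightarrow> real" where
  "fj P \<gamma> j x = exp (\<Sum>k\<in>UNIV. gvec P \<gamma> j k * real (x k))"

lemma aa_ge1:
  assumes jp: "jackson_params lam mu P" and g: "\<And>i. \<gamma> i \<ge> 0"
  shows "aa P \<gamma> j i \<ge> 1"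
  unfolding aa_def using Qhit_nonneg[OF jp] g by simp

lemma aa_pos:
  assumes jp: "jackson_params lam mu P" and g: "\<And>i. \<gamma> i \<ge> 0"
  shows "aa P \<gamma> j i > 0"
  using aa_ge1[of lam mu P \<gamma> j i, OF jp g] by simp

lemma gvec_aa: "gvec P \<gamma> j k = ln (aa P \<gamma> j k)"
  by (simp add: gvec_def aa_def)

lemma sum_upd:
  fixes g :: "'d::finite \<Rightarrow> real"
  shows "(\<Sum>k\<in>UNIV. g k * real ((x(i := v)) k)) = (\<Sum>k\<in>UNIV. g k * real (x k)) + g i * (real v - real (x i))"
proof -
  have "(\<Sum>k\<in>UNIV. g k * real ((x(i := v)) k)) = (\<Sum>k\<in>UNIV. g k * real (x k) + (if k = i then g i * (real v - real (x i)) else 0))"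
    by (intro sum.cong) (auto simp: algebra_simps)
  thus ?thesis by (simp add: sum.distrib)
qed

lemma fj_up:
  assumes jp: "jackson_params lam mu P" and g: "\<And>i. \<gamma> i \<ge> 0"
  shows "fj P \<gamma> j (up x i) = fj P \<gamma> j x * aa P \<gamma> j i"
proof -
  have "aa P \<gamma> j i > 0" using aa_pos[of lam mu P \<gamma>, OF jp g] by auto
  thus ?thesis
    unfolding fj_def up_def sum_upd gvec_aa by (simp add: exp_add)
qed

lemma fj_dn:
  assumes jp: "jackson_params lam mu P" and g: "\<And>i. \<gamma> i \<ge> 0" and xi: "0 < x i"
  shows "fj P \<gamma> j (dn x i) = fj P \<gamma> j x / aa P \<gamma> j i"
proof -
  have "aa P \<gamma> j i > 0" using aa_pos[of lam mu P \<gamma>, OF jp g] by auto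
  moreover have "real (x i - 1) - real (x i) = -1" using xi by simp
  ultimately show ?thesis
    unfolding fj_def dn_def sum_upd gvec_aa by (simp add: exp_add exp_diff exp_minus field_simps)
qed

lemma fj_mv:
  assumes jp: "jackson_params lam mu P" and g: "\<And>i. \<gamma> i \<ge> 0" and xi: "0 < x i" and li: "l \<noteq> i"
  shows "fj P \<gamma> j (mv x i l) = fj P \<gamma> j x * aa P \<gamma> j l / aa P \<gamma> j i"
proof -
  have p: "aa P \<gamma> j i > 0" "aa P \<gamma> j l > 0" using aa_pos[of lam mu P \<gamma>, OF jp g] by auto
  have "real (x i - 1) - real (x i) = -1" using xi by simp
  moreover have "(x(i := x i - 1)) l = x l" using li by simp
  ultimately show ?thesis using p
    unfolding fj_def mv_def sum_upd gvec_aa by (simp add: exp_add exp_diff exp_minus field_simps)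
qed

lemma Jsum_cong:
  assumes "\<And>i. g (up x i) = h (up x i)" "\<And>i. 0 < x i \<Longrightarrow> g (dn x i) = h (dn x i)"
    "\<And>i l. 0 < x i \<Longrightarrow> l \<noteq> i \<Longrightarrow> g (mv x i l) = h (mv x i l)"
  shows "Jsum lam mu P g x = Jsum lam mu P h x"
  unfolding Jsum_def using assms by (intro arg_cong2[where f="(+)"] sum.cong refl) auto

lemma Jsum_lin:
  "Jsum lam mu P (\<lambda>z. g z - c) x = Jsum lam mu P g x - c * Jsum lam mu P (\<lambda>_. 1) x"
proof -
  have 1: "(\<Sum>i\<in>UNIV. lam i * (g (up x i) - c)) = (\<Sum>i\<in>UNIV. lam i * g (up x i)) - c * (\<Sum>i\<in>UNIV. lam i * 1)"
    by (simp add: sum_distrib_left sum_subtractf[symmetric] algebra_simps)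
  have 2: "(\<Sum>i\<in>UNIV. if 0 < x i then mu i * exit_prob P i * (g (dn x i) - c) else 0)
     = (\<Sum>i\<in>UNIV. if 0 < x i then mu i * exit_prob P i * g (dn x i) else 0)
       - c * (\<Sum>i\<in>UNIV. if 0 < x i then mu i * exit_prob P i * 1 else 0)"
    by (simp add: sum_distrib_left sum_subtractf[symmetric]) (intro sum.cong, auto simp: algebra_simps)
  have 3: "(\<Sum>i\<in>UNIV. \<Sum>j\<in>UNIV. if j \<noteq> i \<and> 0 < x i then mu i * P $ i $ j * (g (mv x i j) - c) else 0)
     = (\<Sum>i\<in>UNIV. \<Sum>j\<in>UNIV. if j \<noteq> i \<and> 0 < x i then mu i * P $ i $ j * g (mv x i j) else 0)
       - c * (\<Sum>i\<in>UNIV. \<Sum>j\<in>UNIV. if j \<noteq> i \<and> 0 < x i then mu i * P $ i $ j * 1 else 0)"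
    by (simp add: sum_distrib_left sum_subtractf[symmetric]) (intro sum.cong, auto simp: algebra_simps)
  show ?thesis unfolding Jsum_def 1 2 3 by (simp add: algebra_simps)
qed

lemma T_term:
  assumes jp: "jackson_params lam mu P" and g: "\<And>i. \<gamma> i \<ge> 0"
  shows "exit_prob P i * (1 / aa P \<gamma> j i - 1) + (\<Sum>l\<in>UNIV. P $ i $ l * (aa P \<gamma> j l / aa P \<gamma> j i - 1))
     = (if i = j then - \<gamma> j * (1 - sret P j) / (1 + \<gamma> j) else 0)"
proof -
  define A where "A = aa P \<gamma> j i"
  have A: "A > 0" unfolding A_def by (rule aa_pos[of lam mu P \<gamma>, OF jp g])
  have "exit_prob P i * (1 / A - 1) + (\<Sum>l\<in>UNIV. P $ i $ l * (aa P \<gamma> j l / A - 1))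
      = (exit_prob P i + (\<Sum>l\<in>UNIV. P $ i $ l * aa P \<gamma> j l)) / A - (exit_prob P i + (\<Sum>l\<in>UNIV. P $ i $ l))"
  proof -
    have "(\<Sum>l\<in>UNIV. P $ i $ l * (aa P \<gamma> j l / A - 1)) = (\<Sum>l\<in>UNIV. P $ i $ l * aa P \<gamma> j l) / A - (\<Sum>l\<in>UNIV. P $ i $ l)"
      by (simp add: right_diff_distrib sum_subtractf sum_divide_distrib)
    thus ?thesis using A by (simp add: field_simps)
  qed
  also have "exit_prob P i + (\<Sum>l\<in>UNIV. P $ i $ l) = 1" by (simp add: exit_prob_def)
  also have "exit_prob P i + (\<Sum>l\<in>UNIV. P $ i $ l * aa P \<gamma> j l) = 1 + \<gamma> j * (\<Sum>l\<in>UNIV. P $ i $ l * Qhit P l j)"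
    by (simp add: exit_prob_def aa_def algebra_simps sum.distrib sum_distrib_left)
  finally have E: "exit_prob P i * (1 / A - 1) + (\<Sum>l\<in>UNIV. P $ i $ l * (aa P \<gamma> j l / A - 1))
      = (1 + \<gamma> j * (\<Sum>l\<in>UNIV. P $ i $ l * Qhit P l j)) / A - 1" .
  show ?thesis
  proof (cases "i = j")
    case True
    hence "A = 1 + \<gamma> j" by (simp add: A_def aa_def Qhit_diag)
    moreover have "1 + \<gamma> j > 0" using g[of j] by simp
    ultimately show ?thesis using E True unfolding A_def sret_def by (simp add: field_simps)
  next
    case False
    hence "(\<Sum>l\<in>UNIV. P $ i $ l * Qhit P l j) = Qhit P i j" using Qhit_rec[OF jp False] by simp
    hence "(1 + \<gamma> j * (\<Sum>l\<in>UNIV. P $ i $ l * Qhit P l j)) = A" by (simp add: A_def aa_def algebra_simps)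
    thus ?thesis using E False A unfolding A_def by simp
  qed
qed

lemma drift_fj:
  assumes jp: "jackson_params lam mu P" and g: "\<And>i. \<gamma> i \<ge> 0" and tr: "traffic lam P nu"
  shows "Jsum lam mu P (\<lambda>z. fj P \<gamma> j z - fj P \<gamma> j x) x
     = fj P \<gamma> j x * (\<gamma> j * (1 - sret P j) * nu j
          - (if 0 < x j then mu j * \<gamma> j * (1 - sret P j) / (1 + \<gamma> j) else 0))"
proof -
  let ?f = "fj P \<gamma> j x" and ?a = "aa P \<gamma> j"
  have pii: "\<And>i. P $ i $ i = 0" using jp by (simp add: jackson_params_def)
  have 1: "(\<Sum>i\<in>UNIV. lam i * (fj P \<gamma> j (up x i) - ?f)) = ?f * (\<gamma> j * (\<Sum>i\<in>UNIV. lam i * Qhit P i j))"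
    by (simp add: fj_up[of lam mu P \<gamma>, OF jp g] sum_distrib_left aa_def algebra_simps)
  have 2: "(\<Sum>i\<in>UNIV. if 0 < x i then mu i * exit_prob P i * (fj P \<gamma> j (dn x i) - ?f) else 0)
     = (\<Sum>i\<in>UNIV. if 0 < x i then ?f * (mu i * (exit_prob P i * (1 / ?a i - 1))) else 0)"
    by (intro sum.cong refl) (auto simp: fj_dn[of lam mu P \<gamma>, OF jp g] field_simps)
  have 3: "(\<Sum>i\<in>UNIV. \<Sum>l\<in>UNIV. if l \<noteq> i \<and> 0 < x i then mu i * P $ i $ l * (fj P \<gamma> j (mv x i l) - ?f) else 0)
     = (\<Sum>i\<in>UNIV. if 0 < x i then ?f * (mu i * (\<Sum>l\<in>UNIV. P $ i $ l * (?a l / ?a i - 1))) else 0)"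
  proof (intro sum.cong refl)
    fix i
    show "(\<Sum>l\<in>UNIV. if l \<noteq> i \<and> 0 < x i then mu i * P $ i $ l * (fj P \<gamma> j (mv x i l) - ?f) else 0)
      = (if 0 < x i then ?f * (mu i * (\<Sum>l\<in>UNIV. P $ i $ l * (?a l / ?a i - 1))) else 0)"
    proof (cases "0 < x i")
      case True
      have "(\<Sum>l\<in>UNIV. if l \<noteq> i \<and> 0 < x i then mu i * P $ i $ l * (fj P \<gamma> j (mv x i l) - ?f) else 0)
          = (\<Sum>l\<in>UNIV. ?f * (mu i * (P $ i $ l * (?a l / ?a i - 1))))"
        using True by (intro sum.cong refl) (auto simp: fj_mv[of lam mu P \<gamma> x i, OF jp g True] pii field_simps)
      thus ?thesis using True by (simp add: sum_distrib_left)
    qed simp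
  qed
  have "Jsum lam mu P (\<lambda>z. fj P \<gamma> j z - ?f) x
     = ?f * (\<gamma> j * (\<Sum>i\<in>UNIV. lam i * Qhit P i j))
       + (\<Sum>i\<in>UNIV. if 0 < x i then ?f * (mu i * (exit_prob P i * (1 / ?a i - 1) + (\<Sum>l\<in>UNIV. P $ i $ l * (?a l / ?a i - 1)))) else 0)"
    unfolding Jsum_def 1 2 3 by (simp add: sum.distrib[symmetric] distrib_left, intro sum.cong refl, simp add: distrib_left)
  also have "(\<Sum>i\<in>UNIV. if 0 < x i then ?f * (mu i * (exit_prob P i * (1 / ?a i - 1) + (\<Sum>l\<in>UNIV. P $ i $ l * (?a l / ?a i - 1)))) else 0)
     = (\<Sum>i\<in>UNIV. if i = j then (if 0 < x j then ?f * (mu j * (- \<gamma> j * (1 - sret P j) / (1 + \<gamma> j))) else 0) else 0)"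
    by (intro sum.cong refl) (auto simp: T_term[of lam mu P \<gamma>, OF jp g])
  finally have F: "Jsum lam mu P (\<lambda>z. fj P \<gamma> j z - ?f) x = ?f * (\<gamma> j * (\<Sum>i\<in>UNIV. lam i * Qhit P i j)) +
     (if 0 < x j then ?f * (mu j * (- \<gamma> j * (1 - sret P j) / (1 + \<gamma> j))) else 0)"
    by simp
  have g1: "1 + \<gamma> j \<noteq> 0" using g[of j] by simp
  show ?thesis unfolding F traffic_Q[OF jp tr, of j] using g1
    by (cases "0 < x j") (simp_all add: field_simps)
qed


lemma Gamma_sep:
  fixes P :: "real^'d::finite^'d" and \<gamma> :: "'d \<Rightarrow> real"
  assumes G: "\<gamma> \<in> Gamma_set P"
  shows "\<exists>\<delta>>0. \<forall>x::'d \<Rightarrow> nat. x j = 0 \<longrightarrow> (\<exists>k.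
     (\<Sum>l\<in>UNIV. gvec P \<gamma> k l * real (x l)) - (\<Sum>l\<in>UNIV. gvec P \<gamma> j l * real (x l)) \<ge> \<delta> * (\<Sum>l\<in>UNIV. real (x l)))"
proof -
  define D where "D k v = (\<Sum>l\<in>UNIV. (gvec P \<gamma> k l - gvec P \<gamma> j l) * v $ l)" for k and v :: "real^'d"
  define \<psi> where "\<psi> v = (\<Sum>k\<in>UNIV. max 0 (D k v))" for v
  define T where "T = {v :: real^'d. (\<forall>k. 0 \<le> v $ k) \<and> v $ j = 0 \<and> (\<Sum>k\<in>UNIV. v $ k) = 1}"
  have Gam: "\<And>v. (\<forall>i. v i \<ge> 0) \<and> (\<exists>k. v k \<noteq> 0) \<and> v j = 0 \<Longrightarrow>
        (\<Sum>k\<in>UNIV. gvec P \<gamma> j k * v k) < (MAX i. \<Sum>k\<in>UNIV. gvec P \<gamma> i k * v k)"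
    using G unfolding Gamma_set_def by blast
  have pos: "\<psi> v > 0" if vT: "v \<in> T" for v
  proof -
    define w where "w k = v $ k" for k
    have nz: "\<exists>k. w k \<noteq> 0"
    proof (rule ccontr)
      assume "\<not> (\<exists>k. w k \<noteq> 0)"
      hence "(\<Sum>k\<in>UNIV. v $ k) = 0" by (simp add: w_def)
      with vT show False by (simp add: T_def)
    qed
    have lt: "(\<Sum>k\<in>UNIV. gvec P \<gamma> j k * w k) < (MAX i. \<Sum>k\<in>UNIV. gvec P \<gamma> i k * w k)"
    proof -
      have "\<forall>i. w i \<ge> 0" "w j = 0" using vT by (simp_all add: T_def w_def)
      thus ?thesis using Gam nz by blast
    qed
    define F where "F i = (\<Sum>k\<in>UNIV. gvec P \<gamma> i k * w k)" for i
    have "Max (range F) \<in> range F" by (rule Max_in) simp_all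
    then obtain i where i0: "Max (range F) = F i" by blast
    have i: "(MAX i. \<Sum>k\<in>UNIV. gvec P \<gamma> i k * w k) = (\<Sum>k\<in>UNIV. gvec P \<gamma> i k * w k)"
      using i0 unfolding F_def .
    have "D i v = (\<Sum>k\<in>UNIV. gvec P \<gamma> i k * w k) - (\<Sum>k\<in>UNIV. gvec P \<gamma> j k * w k)"
      unfolding D_def w_def by (simp only: left_diff_distrib sum_subtractf)
    hence "D i v > 0" using lt i by linarith
    hence "0 < max 0 (D i v)" by simp
    also have "\<dots> \<le> \<psi> v" unfolding \<psi>_def by (rule member_le_sum) auto
    finally show ?thesis .
  qed
  have "\<exists>\<delta>>0. \<forall>v\<in>T. \<psi> v \<ge> \<delta>"
  proof (cases "T = {}")
    case True thus ?thesis by (intro exI[of _ 1]) auto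
  next
    case False
    have cT: "compact T"
    proof (subst compact_eq_bounded_closed, intro conjI)
      show "bounded T" unfolding bounded_iff
      proof (intro exI ballI)
        fix v assume v: "v \<in> T"
        have "norm v \<le> (\<Sum>i\<in>UNIV. \<bar>v $ i\<bar>)" by (rule norm_le_l1_cart)
        also have "\<dots> = 1" using v by (simp add: T_def)
        finally show "norm v \<le> 1" .
      qed
      show "closed T" unfolding T_def
        by (intro closed_Collect_conj closed_Collect_all closed_Collect_le closed_Collect_eq
            continuous_intros)
    qed
    have cpsi: "continuous_on T \<psi>"
      unfolding \<psi>_def D_def by (intro continuous_intros)
    obtain v0 where v0: "v0 \<in> T" "\<And>v. v \<in> T \<Longrightarrow> \<psi> v0 \<le> \<psi> v"
      using continuous_attains_inf[OF cT False cpsi] by blast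
    show ?thesis by (intro exI[of _ "\<psi> v0"]) (use v0 pos in auto)
  qed
  then obtain \<delta> where d: "\<delta> > 0" "\<And>v. v \<in> T \<Longrightarrow> \<psi> v \<ge> \<delta>" by blast
  define n where "n = real CARD('d)"
  have n: "n \<ge> 1" unfolding n_def by simp
  show ?thesis
  proof (intro exI[of _ "\<delta> / n"] conjI allI impI)
    show "\<delta> / n > 0" using d n by simp
    fix x :: "'d \<Rightarrow> nat" assume xj: "x j = 0"
    define s where "s = (\<Sum>l\<in>UNIV. real (x l))"
    have s0: "s \<ge> 0" unfolding s_def by (simp add: sum_nonneg)
    show "\<exists>k. (\<Sum>l\<in>UNIV. gvec P \<gamma> k l * real (x l)) - (\<Sum>l\<in>UNIV. gvec P \<gamma> j l * real (x l)) \<ge> \<delta> / n * s"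
    proof (cases "s = 0")
      case True thus ?thesis by (intro exI[of _ j]) simp
    next
      case False
      hence sp: "s > 0" using s0 by simp
      define v where "v = (\<chi> l. real (x l) / s)"
      have vT: "v \<in> T" unfolding T_def v_def using sp xj
        by (simp add: sum_divide_distrib[symmetric] s_def)
      have Dx: "D k v = ((\<Sum>l\<in>UNIV. gvec P \<gamma> k l * real (x l)) - (\<Sum>l\<in>UNIV. gvec P \<gamma> j l * real (x l))) / s" for k
        unfolding D_def v_def by (simp add: sum_divide_distrib[symmetric] sum_subtractf left_diff_distrib)
      have "\<exists>k. max 0 (D k v) \<ge> \<delta> / n"
      proof (rule ccontr)
        assume "\<not> ?thesis"
        hence lt: "\<And>k. max 0 (D k v) < \<delta> / n" by (simp add: not_le)
        have "\<psi> v < (\<Sum>k\<in>(UNIV::'d set). \<delta> / n)" unfolding \<psi>_def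
          by (rule sum_strict_mono[OF finite UNIV_not_empty]) (rule lt)
        also have "\<dots> = \<delta>" using n by (simp add: n_def)
        finally show False using d(2)[OF vT] by simp
      qed
      then obtain k where k: "max 0 (D k v) \<ge> \<delta> / n" by blast
      moreover have "\<delta> / n > 0" using d n by simp
      ultimately have "D k v \<ge> \<delta> / n" by (simp add: max_def split: if_splits)
      hence "(\<delta> / n) * s \<le> D k v * s" using sp by (intro mult_right_mono) auto
      also have "D k v * s = (\<Sum>l\<in>UNIV. gvec P \<gamma> k l * real (x l)) - (\<Sum>l\<in>UNIV. gvec P \<gamma> j l * real (x l))"
        using Dx[of k] sp by simp
      finally show ?thesis by blast
    qed
  qed
qed


lemma Jsum_add:
  "Jsum lam mu P (\<lambda>z. g z + h z) x = Jsum lam mu P g x + Jsum lam mu P h x"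
proof -
  have 1: "(\<Sum>i\<in>UNIV. lam i * (g (up x i) + h (up x i))) = (\<Sum>i\<in>UNIV. lam i * g (up x i)) + (\<Sum>i\<in>UNIV. lam i * h (up x i))"
    by (simp add: sum.distrib[symmetric] algebra_simps)
  have 2: "(\<Sum>i\<in>UNIV. if 0 < x i then mu i * exit_prob P i * (g (dn x i) + h (dn x i)) else 0)
     = (\<Sum>i\<in>UNIV. if 0 < x i then mu i * exit_prob P i * g (dn x i) else 0)
       + (\<Sum>i\<in>UNIV. if 0 < x i then mu i * exit_prob P i * h (dn x i) else 0)"
    by (simp add: sum.distrib[symmetric]) (intro sum.cong, auto simp: algebra_simps)
  have 3: "(\<Sum>i\<in>UNIV. \<Sum>j\<in>UNIV. if j \<noteq> i \<and> 0 < x i then mu i * P $ i $ j * (g (mv x i j) + h (mv x i j)) else 0)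
     = (\<Sum>i\<in>UNIV. \<Sum>j\<in>UNIV. if j \<noteq> i \<and> 0 < x i then mu i * P $ i $ j * g (mv x i j) else 0)
       + (\<Sum>i\<in>UNIV. \<Sum>j\<in>UNIV. if j \<noteq> i \<and> 0 < x i then mu i * P $ i $ j * h (mv x i j) else 0)"
    by (simp add: sum.distrib[symmetric]) (intro sum.cong, auto simp: algebra_simps)
  show ?thesis unfolding Jsum_def 1 2 3 by (simp add: algebra_simps)
qed

lemma Jsum_zero: "Jsum lam mu P (\<lambda>z. 0::real) x = 0"
  unfolding Jsum_def by (simp only: mult_zero_right if_cancel sum.neutral_const add_0)

lemma Jsum_sum:
  assumes "finite A"
  shows "Jsum lam mu P (\<lambda>z. \<Sum>j\<in>A. g j z) x = (\<Sum>j\<in>A. Jsum lam mu P (g j) x)"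
  using assms
proof (induction A rule: finite_induct)
  case empty thus ?case by (simp add: Jsum_zero)
next
  case (insert a A)
  thus ?case by (simp add: Jsum_add)
qed

definition FF :: "real^'d^'d \<Rightarrow> ('d::finite \<Rightarrow> real) \<Rightarrow> ('d \<Rightarrow> nat) \<Rightarrow> real" where
  "FF P \<gamma> x = (\<Sum>j\<in>UNIV. fj P \<gamma> j x)"

lemma fj_pos: "fj P \<gamma> j x > 0" by (simp add: fj_def)

lemma FF_pos: "FF P \<gamma> x > 0"
  unfolding FF_def by (rule sum_pos) (auto simp: fj_pos)

lemma drift_FF:
  assumes jp: "jackson_params lam mu P" and g: "\<And>i. \<gamma> i \<ge> 0" and tr: "traffic lam P nu"
  shows "(\<Sum>\<^sub>\<infinity>z. unif_kernel lam mu P x z * FF P \<gamma> z) = FF P \<gamma> x +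
     (\<Sum>j\<in>UNIV. fj P \<gamma> j x * (\<gamma> j * (1 - sret P j) * nu j
          - (if 0 < x j then mu j * \<gamma> j * (1 - sret P j) / (1 + \<gamma> j) else 0))) / unif_const lam mu"
proof -
  have "Jsum lam mu P (FF P \<gamma>) x - Jsum lam mu P (\<lambda>_. 1) x * FF P \<gamma> x
      = Jsum lam mu P (\<lambda>z. FF P \<gamma> z - FF P \<gamma> x) x"
    by (simp add: Jsum_lin algebra_simps)
  also have "\<dots> = Jsum lam mu P (\<lambda>z. \<Sum>j\<in>UNIV. fj P \<gamma> j z - fj P \<gamma> j x) x"
    unfolding FF_def by (simp add: sum_subtractf)
  also have "\<dots> = (\<Sum>j\<in>UNIV. Jsum lam mu P (\<lambda>z. fj P \<gamma> j z - fj P \<gamma> j x) x)"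
    by (rule Jsum_sum) simp
  also have "\<dots> = (\<Sum>j\<in>UNIV. fj P \<gamma> j x * (\<gamma> j * (1 - sret P j) * nu j
          - (if 0 < x j then mu j * \<gamma> j * (1 - sret P j) / (1 + \<gamma> j) else 0)))"
    by (intro sum.cong refl drift_fj[OF jp _ tr]) (rule g)
  finally show ?thesis by (simp add: infsum_kernel)
qed


lemma lyap:
  fixes lam mu nu :: "'d::finite \<Rightarrow> real" and P :: "real^'d^'d"
  assumes jp: "jackson_params lam mu P" and hA: "hypA lam mu P" and tr: "traffic lam P nu"
    and G: "\<gamma> \<in> Gamma_set P"
    and mm: "m' < (MIN i. \<gamma> i / (Gmat P $ i $ i) * (mu i / (1 + \<gamma> i) - nu i))"
  shows "\<exists>E \<rho>. finite E \<and> \<rho> \<ge> 0 \<and> unif_const lam mu * (1 - \<rho>) = m' \<and>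
     (\<forall>x. x \<notin> E \<longrightarrow> (\<Sum>\<^sub>\<infinity>z. unif_kernel lam mu P x z * FF P \<gamma> z) \<le> \<rho> * FF P \<gamma> x)"
proof -
  have g: "\<And>i. \<gamma> i \<ge> 0" using G by (simp add: Gamma_set_def)
  define mj where "mj j = \<gamma> j / (Gmat P $ j $ j) * (mu j / (1 + \<gamma> j) - nu j)" for j
  define m where "m = (MIN i. \<gamma> i / (Gmat P $ i $ i) * (mu i / (1 + \<gamma> i) - nu i))"
  have mle: "m \<le> mj j" for j unfolding m_def mj_def by (rule Min_le) auto
  have mj_alt: "mj j = \<gamma> j * (1 - sret P j) * (mu j / (1 + \<gamma> j) - nu j)" for j
  proof -
    have h: "Gmat P $ j $ j * (1 - sret P j) = 1" by (rule G_diag[OF jp hA])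
    hence nz: "Gmat P $ j $ j \<noteq> 0" by auto
    have "1 - sret P j = 1 / Gmat P $ j $ j" using h nz by (simp add: eq_divide_eq mult.commute)
    thus ?thesis unfolding mj_def by simp
  qed
  define Bj where "Bj j = \<gamma> j * (1 - sret P j) * nu j" for j
  define K0 where "K0 = (\<Sum>j\<in>UNIV. \<bar>Bj j\<bar>) + \<bar>m\<bar>"
  have K0: "K0 \<ge> 0" unfolding K0_def by (simp add: sum_nonneg)
  define trm where "trm j x = fj P \<gamma> j x * (\<gamma> j * (1 - sret P j) * nu j
          - (if 0 < x j then mu j * \<gamma> j * (1 - sret P j) / (1 + \<gamma> j) else 0))" for j and x :: "'d \<Rightarrow> nat"
  have trm_le: "trm j x \<le> - m * fj P \<gamma> j x + (if x j = 0 then K0 * fj P \<gamma> j x else 0)" for j x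
  proof (cases "x j = 0")
    case True
    have "\<gamma> j * (1 - sret P j) * nu j \<le> - m + K0"
    proof -
      have "Bj j \<le> \<bar>Bj j\<bar>" by simp
      also have "\<bar>Bj j\<bar> \<le> (\<Sum>j\<in>UNIV. \<bar>Bj j\<bar>)" by (rule member_le_sum) auto
      finally show ?thesis unfolding K0_def Bj_def by linarith
    qed
    hence "trm j x \<le> fj P \<gamma> j x * (- m + K0)"
      unfolding trm_def using True fj_pos[of P \<gamma> j x] by (intro mult_left_mono) auto
    thus ?thesis using True by (simp add: algebra_simps)
  next
    case False
    have g1: "1 + \<gamma> j > 0" using g[of j] by simp
    have "\<gamma> j * (1 - sret P j) * nu j - mu j * \<gamma> j * (1 - sret P j) / (1 + \<gamma> j) = - mj j"
      unfolding mj_alt using g1 by (simp add: field_simps)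
    hence "trm j x = - mj j * fj P \<gamma> j x" unfolding trm_def using False by simp
    also have "\<dots> \<le> - m * fj P \<gamma> j x" using mle[of j] fj_pos[of P \<gamma> j x] by (intro mult_right_mono) auto
    finally show ?thesis using False by simp
  qed
  have "\<forall>j. \<exists>\<delta>>0. \<forall>x::'d \<Rightarrow> nat. x j = 0 \<longrightarrow> (\<exists>k.
     (\<Sum>l\<in>UNIV. gvec P \<gamma> k l * real (x l)) - (\<Sum>l\<in>UNIV. gvec P \<gamma> j l * real (x l)) \<ge> \<delta> * (\<Sum>l\<in>UNIV. real (x l)))"
    using Gamma_sep[OF G] by blast
  then obtain \<delta>f where df: "\<And>j. \<delta>f j > 0" "\<And>j x. x j = 0 \<Longrightarrow> (\<exists>k.
     (\<Sum>l\<in>UNIV. gvec P \<gamma> k l * real (x l)) - (\<Sum>l\<in>UNIV. gvec P \<gamma> j l * real (x l)) \<ge> \<delta>f j * (\<Sum>l\<in>UNIV. real (x l)))"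
    by metis
  define \<delta> where "\<delta> = Min (range \<delta>f)"
  have dpos: "\<delta> > 0" unfolding \<delta>_def using df(1) by (subst Min_gr_iff) auto
  have dle: "\<delta> \<le> \<delta>f j" for j unfolding \<delta>_def by (rule Min_le) auto
  have fsmall: "fj P \<gamma> j x \<le> exp (- \<delta> * (\<Sum>l\<in>UNIV. real (x l))) * FF P \<gamma> x" if xj: "x j = 0" for j x
  proof -
    obtain k where k: "(\<Sum>l\<in>UNIV. gvec P \<gamma> k l * real (x l)) - (\<Sum>l\<in>UNIV. gvec P \<gamma> j l * real (x l))
       \<ge> \<delta>f j * (\<Sum>l\<in>UNIV. real (x l))" using df(2)[of x j, OF xj] by blast
    have s0: "(\<Sum>l\<in>UNIV. real (x l)) \<ge> 0" by (simp add: sum_nonneg)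
    have "\<delta> * (\<Sum>l\<in>UNIV. real (x l)) \<le> \<delta>f j * (\<Sum>l\<in>UNIV. real (x l))"
      using dle[of j] s0 by (intro mult_right_mono) auto
    hence "(\<Sum>l\<in>UNIV. gvec P \<gamma> j l * real (x l)) \<le> - \<delta> * (\<Sum>l\<in>UNIV. real (x l)) + (\<Sum>l\<in>UNIV. gvec P \<gamma> k l * real (x l))"
      using k by linarith
    hence "fj P \<gamma> j x \<le> exp (- \<delta> * (\<Sum>l\<in>UNIV. real (x l))) * fj P \<gamma> k x"
      unfolding fj_def by (simp add: exp_add[symmetric])
    also have "fj P \<gamma> k x \<le> FF P \<gamma> x" unfolding FF_def
      by (rule member_le_sum) (auto simp: less_imp_le[OF fj_pos])
    finally show ?thesis by simp
  qed
  define d where "d = real CARD('d)"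
  have d1: "d \<ge> 1" unfolding d_def by simp
  have mm': "m - m' > 0" using mm unfolding m_def by simp
  obtain N :: nat where N: "real N \<ge> (ln (K0 * d + 1) - ln (m - m')) / \<delta>"
    using real_nat_ceiling_ge by blast
  have eN: "K0 * d * exp (- \<delta> * real N) \<le> m - m'"
  proof -
    have "ln (K0 * d + 1) - ln (m - m') \<le> \<delta> * real N" using N dpos by (simp add: field_simps)
    hence "ln (K0 * d + 1) + (- \<delta> * real N) \<le> ln (m - m')" by simp
    hence "exp (ln (K0 * d + 1) + (- \<delta> * real N)) \<le> exp (ln (m - m'))" by simp
    hence "(K0 * d + 1) * exp (- \<delta> * real N) \<le> m - m'"
    proof -
      have "K0 * d + 1 > 0" using K0 d1 by (smt (verit) mult_nonneg_nonneg)
      hence "exp (ln (K0 * d + 1) + (- \<delta> * real N)) = (K0 * d + 1) * exp (- \<delta> * real N)"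
        by (simp only: exp_add exp_ln)
      moreover have "exp (ln (m - m')) = m - m'" using mm' by simp
      ultimately show ?thesis using \<open>exp (ln (K0 * d + 1) + (- \<delta> * real N)) \<le> exp (ln (m - m'))\<close> by simp
    qed
    moreover have "K0 * d * exp (- \<delta> * real N) \<le> (K0 * d + 1) * exp (- \<delta> * real N)"
      by (intro mult_right_mono) auto
    ultimately show ?thesis by linarith
  qed
  define E where "E = {x :: 'd \<Rightarrow> nat. (\<Sum>l\<in>UNIV. x l) < N}"
  have finE: "finite E"
  proof (rule finite_subset)
    show "E \<subseteq> {x. \<forall>l. (l \<in> UNIV \<longrightarrow> x l \<in> {..N}) \<and> (l \<notin> UNIV \<longrightarrow> x l = 0)}"
    proof
      fix x assume "x \<in> E"
      hence "x l \<le> N" for l using member_le_sum[of l UNIV x] unfolding E_def by simp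
      thus "x \<in> {x. \<forall>l. (l \<in> UNIV \<longrightarrow> x l \<in> {..N}) \<and> (l \<notin> UNIV \<longrightarrow> x l = 0)}" by auto
    qed
    show "finite {x :: 'd \<Rightarrow> nat. \<forall>l. (l \<in> UNIV \<longrightarrow> x l \<in> {..N}) \<and> (l \<notin> UNIV \<longrightarrow> x l = (0::nat))}"
      by (rule finite_set_of_finite_funs) auto
  qed
  define C where "C = unif_const lam mu"
  have Cpos: "C \<ge> 1" unfolding C_def by (rule unif_const_pos[OF jp])
  define \<rho> where "\<rho> = 1 - m' / C"
  have drift: "(\<Sum>\<^sub>\<infinity>z. unif_kernel lam mu P x z * FF P \<gamma> z) \<le> \<rho> * FF P \<gamma> x" if xE: "x \<notin> E" for x
  proof -
    have sx: "real N \<le> (\<Sum>l\<in>UNIV. real (x l))" using xE unfolding E_def by (simp flip: of_nat_sum)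
    have ex: "exp (- \<delta> * (\<Sum>l\<in>UNIV. real (x l))) \<le> exp (- \<delta> * real N)"
      using sx dpos by simp
    have "(\<Sum>j\<in>UNIV. trm j x) \<le> (\<Sum>j\<in>UNIV. - m * fj P \<gamma> j x + (if x j = 0 then K0 * fj P \<gamma> j x else 0))"
      by (rule sum_mono) (rule trm_le)
    also have "\<dots> \<le> (\<Sum>j\<in>UNIV. - m * fj P \<gamma> j x + K0 * (exp (- \<delta> * real N) * FF P \<gamma> x))"
    proof (rule sum_mono)
      fix j
      have "(if x j = 0 then K0 * fj P \<gamma> j x else 0) \<le> K0 * (exp (- \<delta> * real N) * FF P \<gamma> x)"
      proof (cases "x j = 0")
        case True
        have "fj P \<gamma> j x \<le> exp (- \<delta> * real N) * FF P \<gamma> x"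
          using fsmall[of x j, OF True] ex FF_pos[of P \<gamma> x] by (smt (verit) mult_right_mono)
        thus ?thesis using True K0 by (simp add: mult_left_mono)
      next
        case False thus ?thesis using K0 FF_pos[of P \<gamma> x] by simp
      qed
      thus "- m * fj P \<gamma> j x + (if x j = 0 then K0 * fj P \<gamma> j x else 0)
          \<le> - m * fj P \<gamma> j x + K0 * (exp (- \<delta> * real N) * FF P \<gamma> x)" by simp
    qed
    also have "\<dots> = - m * FF P \<gamma> x + d * K0 * exp (- \<delta> * real N) * FF P \<gamma> x"
    proof -
      define cN where "cN = K0 * (exp (- \<delta> * real N) * FF P \<gamma> x)"
      have "(\<Sum>j\<in>UNIV. - m * fj P \<gamma> j x + cN) = - m * FF P \<gamma> x + d * cN"
        unfolding FF_def d_def by (simp add: sum.distrib sum_distrib_left sum_negf sum_subtractf)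
      thus ?thesis unfolding cN_def by (simp add: algebra_simps)
    qed
    also have "\<dots> \<le> - m * FF P \<gamma> x + (m - m') * FF P \<gamma> x"
      using eN FF_pos[of P \<gamma> x] by (intro add_left_mono mult_right_mono) (auto simp: algebra_simps)
    finally have T: "(\<Sum>j\<in>UNIV. trm j x) \<le> - m' * FF P \<gamma> x" by (simp add: algebra_simps)
    have "(\<Sum>\<^sub>\<infinity>z. unif_kernel lam mu P x z * FF P \<gamma> z) = FF P \<gamma> x + (\<Sum>j\<in>UNIV. trm j x) / C"
      unfolding C_def trm_def by (rule drift_FF[OF jp _ tr]) (rule g)
    also have "\<dots> \<le> FF P \<gamma> x + (- m' * FF P \<gamma> x) / C"
    proof -
      have "(\<Sum>j\<in>UNIV. trm j x) / C \<le> (- m' * FF P \<gamma> x) / C"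
        using T Cpos by (intro divide_right_mono) auto
      thus ?thesis by simp
    qed
    also have "\<dots> = \<rho> * FF P \<gamma> x" unfolding \<rho>_def using Cpos by (simp add: field_simps)
    finally show ?thesis .
  qed
  have rho0: "\<rho> \<ge> 0"
  proof -
    define x0 where "x0 = (\<lambda>_::'d. N)"
    have "x0 \<notin> E" unfolding E_def x0_def using d1 by (simp add: d_def)
    hence "(\<Sum>\<^sub>\<infinity>z. unif_kernel lam mu P x0 z * FF P \<gamma> z) \<le> \<rho> * FF P \<gamma> x0" by (rule drift)
    moreover have "(\<Sum>\<^sub>\<infinity>z. unif_kernel lam mu P x0 z * FF P \<gamma> z) \<ge> 0"
    proof (rule infsum_nonneg)
      fix z show "0 \<le> unif_kernel lam mu P x0 z * FF P \<gamma> z"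
        using unif_kernel_nonneg[OF jp, of x0 z] FF_pos[of P \<gamma> z] by simp
    qed
    ultimately have "\<rho> * FF P \<gamma> x0 \<ge> 0" by linarith
    thus ?thesis using FF_pos[of P \<gamma> x0] by (simp add: zero_le_mult_iff)
  qed
  show ?thesis
    by (intro exI[of _ E] exI[of _ \<rho>] conjI finE rho0 allI impI drift)
       (use Cpos in \<open>simp add: \<rho>_def C_def[symmetric] field_simps\<close>)
qed


lemma taboo_prob_nonneg:
  fixes x :: "'d::finite \<Rightarrow> nat"
  assumes jp: "jackson_params lam mu P" and t: "t \<ge> 0"
  shows "taboo_prob lam mu P E t x y \<ge> 0"
proof -
  let ?c = "unif_const lam mu"
  have c: "?c \<ge> 1" by (rule unif_const_pos[OF jp])
  define a where "a n = exp (- ?c * t) * (?c * t) ^ n / fact n * taboo_pow lam mu P E n x y" for n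
  define b where "b n = exp (- ?c * t) * (?c * t) ^ n / fact n * 1 ^ n" for n
  have bs: "b sums (exp (- ?c * t) * exp (?c * t * 1))"
    unfolding b_def by (rule poisson_sums)
  have a0: "a n \<ge> 0" for n
    unfolding a_def using c t taboo_pow_nonneg[OF jp] by auto
  have ab: "a n \<le> b n" for n
  proof -
    have "exp (- ?c * t) * (?c * t) ^ n / fact n \<ge> 0" using c t by auto
    hence "exp (- ?c * t) * (?c * t) ^ n / fact n * taboo_pow lam mu P E n x y \<le> exp (- ?c * t) * (?c * t) ^ n / fact n * 1"
      using taboo_pow_le1[OF jp, of E n x y] by (intro mult_left_mono) auto
    thus ?thesis unfolding a_def b_def by simp
  qed
  have sa: "summable a"
    by (rule summable_comparison_test'[OF sums_summable[OF bs], of 0]) (use a0 ab in auto)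
  have "suminf a \<ge> 0" by (rule suminf_nonneg[OF sa a0])
  moreover have "taboo_prob lam mu P E t x y = suminf a" unfolding taboo_prob_def a_def by simp
  ultimately show ?thesis by simp
qed

lemma infinite_states: "\<not> finite (UNIV :: ('d \<Rightarrow> nat) set)"
proof
  assume "finite (UNIV :: ('d \<Rightarrow> nat) set)"
  hence "finite (range (\<lambda>n::nat. (\<lambda>_::'d. n)))" by (rule finite_subset[rotated]) auto
  moreover have "inj (\<lambda>n::nat. (\<lambda>_::'d. n))" by (auto simp: inj_def fun_eq_iff)
  ultimately have "finite (UNIV :: nat set)" using finite_imageD by blast
  thus False by simp
qed

theorem corollary2p2:
  fixes lam mu nu :: "'d::finite \<Rightarrow> real" and P :: "real^'d^'d"
  assumes "jackson_params lam mu P"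
    and "hypA lam mu P"
    and "traffic lam P nu"
    and "\<forall>i. nu i < mu i"
  shows "\<forall>\<gamma>\<in>Gamma_set P. ess_set lam mu P \<noteq> {} \<and>
           ln (ess_spec_rad lam mu P)
             \<le> - (MIN i. \<gamma> i / (Gmat P $ i $ i) * (mu i / (1 + \<gamma> i) - nu i))"
proof (intro ballI)
  note jp = assms(1) and hA = assms(2) and tr = assms(3)
  fix \<gamma> assume G: "\<gamma> \<in> Gamma_set P"
  define m where "m = (MIN i. \<gamma> i / (Gmat P $ i $ i) * (mu i / (1 + \<gamma> i) - nu i))"
  define S where "S = ess_set lam mu P"
  define C where "C = unif_const lam mu"
  have Cpos: "C \<ge> 1" unfolding C_def by (rule unif_const_pos[OF jp])
  have inS: "r \<in> S" if r: "r > exp (- m)" for r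
  proof -
    have rpos: "r > 0" using r by (smt (verit) exp_gt_zero)
    have lr: "ln r > - m" using r rpos by (metis exp_less_cancel_iff exp_ln)
    define m' where "m' = (m - ln r) / 2"
    have mm: "m' < m" unfolding m'_def using lr by simp
    have mr: "m' + ln r > 0" unfolding m'_def using lr by (simp add: field_simps)
    obtain E \<rho> where E: "finite E" "\<rho> \<ge> 0" "unif_const lam mu * (1 - \<rho>) = m'"
      "\<And>x. x \<notin> E \<Longrightarrow> (\<Sum>\<^sub>\<infinity>z. unif_kernel lam mu P x z * FF P \<gamma> z) \<le> \<rho> * FF P \<gamma> x"
      using lyap[OF jp hA tr G mm[unfolded m_def]] by blast
    have "(\<integral>\<^sup>+ t\<in>{0..}. ennreal (r powr (- t) * taboo_prob lam mu P E t x y) \<partial>lborel) < \<infinity>"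
      if x: "x \<notin> E" and y: "y \<notin> E" for x y
    proof (rule int_finite[OF rpos mr])
      show "FF P \<gamma> x / FF P \<gamma> y \<ge> 0" using FF_pos[of P \<gamma>] by (simp add: less_imp_le)
      fix t :: real assume t: "t \<ge> 0"
      show "taboo_prob lam mu P E t x y \<le> FF P \<gamma> x / FF P \<gamma> y * exp (- m' * t)"
        using taboo_prob_upper[OF jp FF_pos E(2) E(4) x t, of y] E(3) by simp
      show "taboo_prob lam mu P E t x y \<ge> 0" by (rule taboo_prob_nonneg[OF jp t])
    qed
    thus ?thesis unfolding S_def ess_set_def using rpos E(1) by blast
  qed
  have lower: "r > exp (- C)" if rS: "r \<in> S" for r
  proof (rule ccontr)
    assume "\<not> r > exp (- C)"
    hence rle: "r \<le> exp (- C)" by simp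
    from rS obtain E where r0: "r > 0" and E: "finite E" and
      I: "\<And>x y. x \<notin> E \<Longrightarrow> y \<notin> E \<Longrightarrow>
        (\<integral>\<^sup>+ t\<in>{0..}. ennreal (r powr (- t) * taboo_prob lam mu P E t x y) \<partial>lborel) < \<infinity>"
      unfolding S_def ess_set_def by blast
    obtain x :: "'d \<Rightarrow> nat" where x: "x \<notin> E" using ex_new_if_finite[OF infinite_states E] by blast
    have lnr: "ln r \<le> - C" using rle r0 by (metis ln_exp ln_le_cancel_iff exp_gt_zero)
    have "(\<integral>\<^sup>+ t\<in>{0..}. ennreal (r powr (- t) * taboo_prob lam mu P E t x x) \<partial>lborel) = \<infinity>"
      by (rule int_infinite[OF r0 lnr]) (use taboo_prob_lower[OF jp] in \<open>simp add: C_def\<close>)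
    with I[OF x x] show False by simp
  qed
  have ne: "S \<noteq> {}" using inS[of "exp (- m) + 1"] by auto
  have bdd: "bdd_below S" unfolding bdd_below_def using lower by (meson less_imp_le)
  have "Inf S \<le> Inf {exp (- m)<..}"
    by (rule cInf_superset_mono) (use inS bdd in auto)
  hence up: "Inf S \<le> exp (- m)" by simp
  have lo: "exp (- C) \<le> Inf S"
    by (rule cInf_greatest[OF ne]) (use lower in \<open>auto intro: less_imp_le\<close>)
  have "ln (Inf S) \<le> ln (exp (- m))"
    using up lo by (subst ln_le_cancel_iff) (auto intro: order_less_le_trans[OF exp_gt_zero])
  hence "ln (Inf S) \<le> - m" by simp
  thus "ess_set lam mu P \<noteq> {} \<and> ln (ess_spec_rad lam mu P) \<le> - (MIN i. \<gamma> i / (Gmat P $ i $ i) * (mu i / (1 + \<gamma> i) - nu i))"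
    using ne unfolding S_def m_def ess_spec_rad_def by simp
qed


end
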